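(* Fix $N$ and $T$, and assume that for every $t\in[0,T_N)_N$ and $x\in\mathbf R^n$, $H^N(t+N^{-1},x)$ is invertible, every component of $h^N(t,x)H^N(t+N^{-1},x)^{-1}$ is strictly positive, and the sum $A^N(t,x)$ of these components satisfies $A^N(t,x)<1$. Let $\Psi^N:\mathbf R^n\to\mathbf R$ and $g^N:(0,T_N]_N\times\mathbf R^n\to\mathbf R$ be bounded, and let $u^N:[0,T_N]_N\times\mathbf R^n\to\mathbf R$ satisfy $u^N(T_N,\cdot)=\Psi^N$ and $$\partial^N_tu^N+\tfrac12\Delta^Nu^N-\langle b^N,\nabla^Nu^N\rangle-c^N(1^Nu^N)=g^N\quad\text{on }(0,T_N]_N\times\mathbf R^n.$$ Then for every $t\in[0,T_N]_N$, $$\sup_{x\in\mathbf R^n}|u^N(t,x)|\le\sup_{y}|\Psi^N(y)|+(T_N-t)\sup_{s\in(t,T_N]_N,\,y\in\mathbf R^n}|g^N(s,y)|.$$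
   Context: Fix $n\ge1$ and a real orthogonal $(n+1)\times(n+1)$ matrix $(e_{i,j})_{0\le i,j\le n}$ with $e_{0,j}>0$ for all $j$; put $e_j=\frac{1}{e_{0,j}}(e_{1,j},\dots,e_{n,j})\in\mathbf R^n$. For $N\in\mathbf N$, $T_N=[TN]/N$ and, for an interval $I\subset[0,\infty)$, $I_N=I\cap\{k/N:k\in\mathbf Z_{\ge0}\}$. Difference operators (acting on functions of $(t,x)$, componentwise on vectors): $\partial^N_kf(t,x)=\sqrt N\sum_{j=0}^nf(t,x+N^{-1/2}e_j)e_{0,j}e_{k,j}$ ($k=1,\dots,n$), $\nabla^N=(\partial^N_1,\dots,\partial^N_n)$, $\Delta^Nf(t,x)=2N\sum_{j=0}^n\{f(t,x+N^{-1/2}e_j)-f(t,x)\}e_{0,j}^2$, $\partial^N_tf(t,x)=N(f(t,x)-f(t-N^{-1},x))$, $1^Nf(t,x)=f(t-N^{-1},x)$. Market data: functions $h^{i,N}:[0,T]_N\times\mathbf R^n\to\mathbf R$, $i=0,\dots,n$, forming the row vector $h^N=(h^{0,N},\dots,h^{n,N})$; $H^N(t,x)$ is the $(n+1)\times(n+1)$ matrix whose entry in row $j$, column $i$ is $h^{i,N}(t,x+N^{-1/2}e_j)$. $\Sigma^N(t,x)$ is the $(n+1)\times(n+1)$ matrix whose first row is $(h^{0,N}(t-N^{-1},x),\dots,h^{n,N}(t-N^{-1},x))$ and whose row $k$ ($k=1,\dots,n$) is $(\partial^N_kh^{0,N}(t,x),\dots,\partial^N_kh^{n,N}(t,x))$;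 under the stated assumptions it is invertible for $t\in(0,T_N]_N$. $(c^N(t,x),b^N(t,x)):=\big(\partial^N_th^N+\tfrac12\Delta^Nh^N\big)(t,x)[\Sigma^N(t,x)]^{-1}\in\mathbf R^{1+n}$, $c^N$ being the first entry and $b^N\in\mathbf R^n$ the rest. *)

theory Defs
  imports "HOL-Analysis.Analysis"
begin

text \<open>Indices 0..n of the (n+1)x(n+1) matrices are modelled by the type 'n option,
  None standing for 0 and Some k for k = 1..n; R^n is real^'n.\<close>

definition grid :: "nat \<Rightarrow> real set" where
  "grid N = {real k / real N | k. True}"

definition TN :: "nat \<Rightarrow> real \<Rightarrow> real" where
  "TN N T = of_int \<lfloor>T * real N\<rfloor> / real N"

definition evec :: "real^('n::finite option)^('n option) \<Rightarrow> 'n option \<Rightarrow> real^'n" where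
  "evec e j = (\<chi> k. e $ Some k $ j / e $ None $ j)"

definition shift :: "real^('n::finite option)^('n option) \<Rightarrow> nat \<Rightarrow> real^'n \<Rightarrow> 'n option \<Rightarrow> real^'n" where
  "shift e N x j = x + (1 / sqrt (real N)) *\<^sub>R evec e j"

definition dpart :: "real^('n::finite option)^('n option) \<Rightarrow> nat \<Rightarrow> (real \<Rightarrow> real^'n \<Rightarrow> 'v::real_vector)
    \<Rightarrow> real \<Rightarrow> real^'n \<Rightarrow> 'n \<Rightarrow> 'v" where
  "dpart e N f t x k = sqrt (real N) *\<^sub>R
     (\<Sum>j\<in>UNIV. (e $ None $ j * e $ Some k $ j) *\<^sub>R f t (shift e N x j))"

definition grad :: "real^('n::finite option)^('n option) \<Rightarrow> nat \<Rightarrow> (real \<Rightarrow> real^'n \<Rightarrow> real)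
    \<Rightarrow> real \<Rightarrow> real^'n \<Rightarrow> real^'n" where
  "grad e N f t x = (\<chi> k. dpart e N f t x k)"

definition lap :: "real^('n::finite option)^('n option) \<Rightarrow> nat \<Rightarrow> (real \<Rightarrow> real^'n \<Rightarrow> 'v::real_vector)
    \<Rightarrow> real \<Rightarrow> real^'n \<Rightarrow> 'v" where
  "lap e N f t x = (2 * real N) *\<^sub>R
     (\<Sum>j\<in>UNIV. (e $ None $ j)\<^sup>2 *\<^sub>R (f t (shift e N x j) - f t x))"

definition dt :: "nat \<Rightarrow> (real \<Rightarrow> 'x \<Rightarrow> 'v::real_vector) \<Rightarrow> real \<Rightarrow> 'x \<Rightarrow> 'v" where
  "dt N f t x = real N *\<^sub>R (f t x - f (t - 1 / real N) x)"

definition Hmat :: "real^('n::finite option)^('n option) \<Rightarrow> nat \<Rightarrow> (real \<Rightarrow> real^'n \<Rightarrow> real^('n option))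
    \<Rightarrow> real \<Rightarrow> real^'n \<Rightarrow> real^('n option)^('n option)" where
  "Hmat e N h t x = (\<chi> j. h t (shift e N x j))"

definition Sigma_mat :: "real^('n::finite option)^('n option) \<Rightarrow> nat \<Rightarrow> (real \<Rightarrow> real^'n \<Rightarrow> real^('n option))
    \<Rightarrow> real \<Rightarrow> real^'n \<Rightarrow> real^('n option)^('n option)" where
  "Sigma_mat e N h t x = (\<chi> r. case r of None \<Rightarrow> h (t - 1 / real N) x | Some k \<Rightarrow> dpart e N h t x k)"

definition cb :: "real^('n::finite option)^('n option) \<Rightarrow> nat \<Rightarrow> (real \<Rightarrow> real^'n \<Rightarrow> real^('n option))
    \<Rightarrow> real \<Rightarrow> real^'n \<Rightarrow> real^('n option)" where
  "cb e N h t x = (dt N h t x + (1/2) *\<^sub>R lap e N h t x) v* matrix_inv (Sigma_mat e N h t x)"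

definition cN :: "real^('n::finite option)^('n option) \<Rightarrow> nat \<Rightarrow> (real \<Rightarrow> real^'n \<Rightarrow> real^('n option))
    \<Rightarrow> real \<Rightarrow> real^'n \<Rightarrow> real" where
  "cN e N h t x = cb e N h t x $ None"

definition bN :: "real^('n::finite option)^('n option) \<Rightarrow> nat \<Rightarrow> (real \<Rightarrow> real^'n \<Rightarrow> real^('n option))
    \<Rightarrow> real \<Rightarrow> real^'n \<Rightarrow> real^'n" where
  "bN e N h t x = (\<chi> k. cb e N h t x $ Some k)"

end

theory Submission
  imports Defs
begin

lemma inv_props:
  fixes A :: "real^'n^'n"
  assumes "invertible A"
  shows "A ** matrix_inv A = mat 1 \<and> matrix_inv A ** A = mat 1"
  using assms unfolding invertible_def matrix_inv_def by (rule someI_ex)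

lemma sum_opt:
  fixes f :: "('n::finite) option \<Rightarrow> real"
  shows "(\<Sum>r\<in>UNIV. f r) = f None + (\<Sum>k\<in>UNIV. f (Some k))"
proof -
  have "(\<Sum>r\<in>UNIV. f r) = (\<Sum>r\<in>insert None (range Some). f r)"
    by (simp add: UNIV_option_conv[symmetric])
  also have "\<dots> = f None + (\<Sum>r\<in>range Some. f r)"
    by (subst sum.insert) auto
  also have "(\<Sum>r\<in>range Some. f r) = (\<Sum>k\<in>UNIV. f (Some k))"
    by (subst sum.reindex) (auto simp: inj_on_def)
  finally show ?thesis .
qed

lemma orth_rows:
  fixes e :: "real^'m^'m"
  assumes "orthogonal_matrix e"
  shows "(\<Sum>j\<in>UNIV. e$a$j * e$b$j) = (if a = b then 1 else 0)"
proof -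
  have "(e ** transpose e)$a$b = mat 1 $a$b" using assms by (simp add: orthogonal_matrix_def)
  thus ?thesis by (simp add: matrix_matrix_mult_def transpose_def mat_def)
qed

lemma orth_cols:
  fixes e :: "real^'m^'m"
  assumes "orthogonal_matrix e"
  shows "(\<Sum>r\<in>UNIV. e$r$i * e$r$j) = (if i = j then 1 else 0)"
proof -
  have "(transpose e ** e)$i$j = mat 1 $i$j" using assms by (simp add: orthogonal_matrix_def)
  thus ?thesis by (simp add: matrix_matrix_mult_def transpose_def mat_def)
qed

lemma orth_recon:
  fixes e :: "real^('n::finite option)^('n option)" and z :: "'n option \<Rightarrow> real"
  assumes "orthogonal_matrix e" and "\<forall>k. (\<Sum>i\<in>UNIV. e$Some k$i * z i) = 0"
  shows "z j = e$None$j * (\<Sum>i\<in>UNIV. e$None$i * z i)"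
proof -
  have "z j = (\<Sum>i\<in>UNIV. z i * (if i = j then 1 else 0))"
    by (simp add: if_distrib cong: if_cong)
  also have "\<dots> = (\<Sum>i\<in>UNIV. z i * (\<Sum>r\<in>UNIV. e$r$i * e$r$j))"
    using orth_cols[OF assms(1)] by simp
  also have "\<dots> = (\<Sum>i\<in>UNIV. \<Sum>r\<in>UNIV. e$r$j * (e$r$i * z i))"
    by (simp add: sum_distrib_left mult_ac)
  also have "\<dots> = (\<Sum>r\<in>UNIV. \<Sum>i\<in>UNIV. e$r$j * (e$r$i * z i))"
    by (rule sum.swap)
  also have "\<dots> = (\<Sum>r\<in>UNIV. e$r$j * (\<Sum>i\<in>UNIV. e$r$i * z i))"
    by (simp add: sum_distrib_left)
  also have "\<dots> = e$None$j * (\<Sum>i\<in>UNIV. e$None$i * z i)"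
    using assms(2) by (simp add: sum_opt)
  finally show ?thesis .
qed

lemma generic:
  fixes e :: "real^('n::finite option)^('n option)" and f :: "real \<Rightarrow> real^'n \<Rightarrow> real"
    and b :: "real^'n"
  assumes O1: "(\<Sum>j\<in>UNIV. (e$None$j)^2) = 1"
  shows "dt N f t x + (1/2) * lap e N f t x - b \<bullet> grad e N f t x - c * f (t - 1/real N) x
     = (\<Sum>j\<in>UNIV. (real N * (e$None$j)^2 - sqrt (real N) * e$None$j * (\<Sum>k\<in>UNIV. b$k * e$Some k$j))
          * f t (shift e N x j)) - (real N + c) * f (t - 1/real N) x"
proof -
  let ?f = "\<lambda>j. f t (shift e N x j)"
  have L: "(1/2) * lap e N f t x = real N * (\<Sum>j\<in>UNIV. (e$None$j)^2 * ?f j) - real N * f t x"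
  proof -
    have "(1/2) * lap e N f t x = real N * (\<Sum>j\<in>UNIV. (e$None$j)^2 * ?f j - (e$None$j)^2 * f t x)"
      by (simp add: lap_def right_diff_distrib)
    also have "\<dots> = real N * (\<Sum>j\<in>UNIV. (e$None$j)^2 * ?f j) - real N * f t x"
      by (simp add: sum_subtractf sum_distrib_right[symmetric] O1 right_diff_distrib)
    finally show ?thesis .
  qed
  have G: "b \<bullet> grad e N f t x = (\<Sum>j\<in>UNIV. sqrt (real N) * e$None$j * (\<Sum>k\<in>UNIV. b$k * e$Some k$j) * ?f j)"
  proof -
    have "b \<bullet> grad e N f t x = (\<Sum>k\<in>UNIV. \<Sum>j\<in>UNIV. sqrt (real N) * e$None$j * (b$k * e$Some k$j) * ?f j)"
      by (simp add: inner_vec_def grad_def dpart_def sum_distrib_left mult_ac)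
    also have "\<dots> = (\<Sum>j\<in>UNIV. \<Sum>k\<in>UNIV. sqrt (real N) * e$None$j * (b$k * e$Some k$j) * ?f j)"
      by (rule sum.swap)
    also have "\<dots> = (\<Sum>j\<in>UNIV. sqrt (real N) * e$None$j * (\<Sum>k\<in>UNIV. b$k * e$Some k$j) * ?f j)"
      by (simp add: sum_distrib_left sum_distrib_right)
    finally show ?thesis .
  qed
  have R: "(\<Sum>j\<in>UNIV. (real N * (e$None$j)^2 - sqrt (real N) * e$None$j * (\<Sum>k\<in>UNIV. b$k * e$Some k$j)) * ?f j)
     = real N * (\<Sum>j\<in>UNIV. (e$None$j)^2 * ?f j)
       - (\<Sum>j\<in>UNIV. sqrt (real N) * e$None$j * (\<Sum>k\<in>UNIV. b$k * e$Some k$j) * ?f j)"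
    by (simp add: left_diff_distrib sum_subtractf sum_distrib_left mult.assoc)
  show ?thesis
    unfolding R L G by (simp add: dt_def algebra_simps)
qed

lemma scaleR_vm: "((a::real) *\<^sub>R (v::real^'m)) v* (M::real^'n^'m) = a *\<^sub>R (v v* M)"
  by (simp add: vector_matrix_mult_def vec_eq_iff sum_distrib_left mult_ac)

lemma step:
  fixes e :: "real^('n::finite option)^('n option)" and N :: nat
    and h :: "real \<Rightarrow> real^'n \<Rightarrow> real^('n option)" and u :: "real \<Rightarrow> real^'n \<Rightarrow> real"
  assumes orth: "orthogonal_matrix e" and pos: "\<forall>j. 0 < e$None$j" and Npos: "0 < N"
   and Hinv: "invertible (Hmat e N h t x)"
   and qpos: "\<forall>i. 0 < (h (t - 1/real N) x v* matrix_inv (Hmat e N h t x))$i"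
   and qsum: "(\<Sum>i\<in>UNIV. (h (t - 1/real N) x v* matrix_inv (Hmat e N h t x))$i) < 1"
   and eq: "dt N u t x + (1/2) * lap e N u t x - bN e N h t x \<bullet> grad e N u t x
           - cN e N h t x * u (t - 1/real N) x = gv"
  shows "u (t - 1/real N) x = (\<Sum>j\<in>UNIV. (h (t - 1/real N) x v* matrix_inv (Hmat e N h t x))$j * u t (shift e N x j))
      - ((\<Sum>i\<in>UNIV. (h (t - 1/real N) x v* matrix_inv (Hmat e N h t x))$i) / real N) * gv"
proof -
  define H where "H = Hmat e N h t x"
  define p where "p = h (t - 1/real N) x"
  define q where "q = p v* matrix_inv H"
  define S where "S = Sigma_mat e N h t x"
  define A where "A = (\<Sum>i\<in>UNIV. q$i)"
  define b where "b = bN e N h t x"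
  define c where "c = cN e N h t x"
  have O1: "(\<Sum>j\<in>UNIV. (e$None$j)^2) = 1"
    using orth_rows[OF orth, of None None] by (simp add: power2_eq_square)
  have O2: "(\<Sum>j\<in>UNIV. e$None$j * e$Some k$j) = 0" for k
    using orth_rows[OF orth, of None "Some k"] by simp
  have Hi: "H ** matrix_inv H = mat 1" "matrix_inv H ** H = mat 1"
    using inv_props[OF Hinv] unfolding H_def by auto
  have pq: "p = q v* H"
    unfolding q_def by (simp add: vector_matrix_mul_assoc Hi)
  have qpos': "\<forall>i. 0 < q$i" using qpos unfolding q_def p_def H_def by simp
  have Apos: "0 < A" unfolding A_def
    by (rule sum_pos) (use qpos' in auto)
  have A1: "A < 1" using qsum unfolding A_def q_def p_def H_def by simp
  have HS: "H$j$i = h t (shift e N x j) $ i" for i j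
    unfolding H_def Hmat_def by simp
  have Sinv: "invertible S"
    unfolding invertible_left_inverse matrix_left_invertible_ker
  proof (intro allI impI)
    fix y assume Sy: "S *v y = 0"
    define z where "z = H *v y"
    have row0: "(S *v y)$None = (\<Sum>j\<in>UNIV. q$j * z$j)"
    proof -
      have "(S *v y)$None = (\<Sum>i\<in>UNIV. p$i * y$i)"
        by (simp add: S_def Sigma_mat_def matrix_vector_mult_def p_def)
      also have "\<dots> = (\<Sum>i\<in>UNIV. (\<Sum>j\<in>UNIV. q$j * H$j$i) * y$i)"
        by (subst pq) (simp add: vector_matrix_mult_def)
      also have "\<dots> = (\<Sum>i\<in>UNIV. \<Sum>j\<in>UNIV. q$j * H$j$i * y$i)"
        by (simp add: sum_distrib_right)
      also have "\<dots> = (\<Sum>j\<in>UNIV. \<Sum>i\<in>UNIV. q$j * H$j$i * y$i)"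
        by (rule sum.swap)
      also have "\<dots> = (\<Sum>j\<in>UNIV. q$j * z$j)"
        by (simp add: z_def matrix_vector_mult_def sum_distrib_left mult.assoc)
      finally show ?thesis .
    qed
    have rowk: "(S *v y)$Some k = sqrt (real N) * (\<Sum>j\<in>UNIV. e$Some k$j * (e$None$j * z$j))" for k
    proof -
      have "(S *v y)$Some k = (\<Sum>i\<in>UNIV. (sqrt (real N) * (\<Sum>j\<in>UNIV. e$None$j * e$Some k$j * H$j$i)) * y$i)"
        by (simp add: S_def Sigma_mat_def matrix_vector_mult_def dpart_def HS)
      also have "\<dots> = sqrt (real N) * (\<Sum>i\<in>UNIV. \<Sum>j\<in>UNIV. e$None$j * e$Some k$j * H$j$i * y$i)"
        by (simp add: sum_distrib_left sum_distrib_right mult.assoc)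
      also have "\<dots> = sqrt (real N) * (\<Sum>j\<in>UNIV. \<Sum>i\<in>UNIV. e$None$j * e$Some k$j * H$j$i * y$i)"
        by (rule arg_cong[where f="\<lambda>s. sqrt (real N) * s"]) (rule sum.swap)
      also have "\<dots> = sqrt (real N) * (\<Sum>j\<in>UNIV. e$Some k$j * (e$None$j * z$j))"
        by (simp add: z_def matrix_vector_mult_def sum_distrib_left mult_ac)
      finally show ?thesis .
    qed
    have sN: "sqrt (real N) > 0" using Npos by simp
    have "\<forall>k. (\<Sum>j\<in>UNIV. e$Some k$j * (e$None$j * z$j)) = 0"
    proof
      fix k
      have "sqrt (real N) * (\<Sum>j\<in>UNIV. e$Some k$j * (e$None$j * z$j)) = 0"
        using rowk[of k] Sy by simp
      then show "(\<Sum>j\<in>UNIV. e$Some k$j * (e$None$j * z$j)) = 0" using sN by simp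
    qed
    then have zz: "e$None$j * z$j = e$None$j * (\<Sum>i\<in>UNIV. e$None$i * (e$None$i * z$i))" for j
      using orth_recon[OF orth, of "\<lambda>j. e$None$j * z$j"] by blast
    define \<alpha> where "\<alpha> = (\<Sum>i\<in>UNIV. e$None$i * (e$None$i * z$i))"
    have zc: "z$j = \<alpha>" for j
    proof -
      have "e$None$j \<noteq> 0" using pos by (metis less_irrefl)
      then show ?thesis using zz[of j] unfolding \<alpha>_def by simp
    qed
    have "0 = (\<Sum>j\<in>UNIV. q$j * \<alpha>)" using row0 Sy zc by simp
    also have "\<dots> = A * \<alpha>" by (simp add: A_def sum_distrib_right)
    finally have "\<alpha> = 0" using Apos by simp
    then have "H *v y = H *v 0" using zc unfolding z_def by (simp add: vec_eq_iff)
    then show "y = 0"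
      using inj_matrix_vector_mult[OF Hinv[folded H_def]] by (meson injD)
  qed
  have Si: "matrix_inv S ** S = mat 1" using inv_props[OF Sinv] by auto
  have cbS: "cb e N h t x v* S = dt N h t x + (1/2) *\<^sub>R lap e N h t x"
    unfolding cb_def S_def[symmetric] by (simp add: vector_matrix_mul_assoc Si)
  define w where "w j = real N * (e$None$j)^2 - sqrt (real N) * e$None$j * (\<Sum>k\<in>UNIV. b$k * e$Some k$j)" for j
  have hrel: "(\<Sum>j\<in>UNIV. w j * H$j$i) = (real N + c) * p$i" for i
  proof -
    define f where "f = (\<lambda>t x. h t x $ i)"
    have gen: "dt N f t x + (1/2) * lap e N f t x - b \<bullet> grad e N f t x - c * f (t - 1/real N) x
      = (\<Sum>j\<in>UNIV. w j * f t (shift e N x j)) - (real N + c) * f (t - 1/real N) x"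
      unfolding w_def by (rule generic[OF O1])
    have dp: "dpart e N h t x k $ i = dpart e N f t x k" for k
      by (simp add: dpart_def f_def)
    have "(cb e N h t x v* S)$i = c * p$i + (\<Sum>k\<in>UNIV. b$k * dpart e N h t x k $ i)"
      by (simp add: vector_matrix_mult_def sum_opt c_def b_def cN_def bN_def S_def Sigma_mat_def p_def)
    also have "\<dots> = c * f (t - 1/real N) x + b \<bullet> grad e N f t x"
      by (simp add: dp inner_vec_def grad_def f_def p_def)
    finally have "c * f (t - 1/real N) x + b \<bullet> grad e N f t x = dt N f t x + (1/2) * lap e N f t x"
      using cbS by (simp add: dt_def lap_def f_def)
    then have "(\<Sum>j\<in>UNIV. w j * f t (shift e N x j)) - (real N + c) * f (t - 1/real N) x = 0"
      using gen by simp
    then show ?thesis by (simp add: f_def HS p_def)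
  qed
  have wq: "w j = (real N + c) * q$j" for j
  proof -
    define W where "W = (\<chi> j. w j)"
    have WH: "W v* H = (real N + c) *\<^sub>R p"
      using hrel by (simp add: W_def vector_matrix_mult_def vec_eq_iff)
    have "W = W v* (H ** matrix_inv H)" by (simp add: Hi)
    also have "\<dots> = (W v* H) v* matrix_inv H"
      by (rule vector_matrix_mul_assoc[symmetric])
    also have "\<dots> = (real N + c) *\<^sub>R q"
      by (simp only: WH scaleR_vm q_def)
    finally have "W$j = ((real N + c) *\<^sub>R q)$j" by simp
    then show ?thesis by (simp add: W_def)
  qed
  have wsum: "(\<Sum>j\<in>UNIV. w j) = real N"
  proof -
    have "(\<Sum>j\<in>UNIV. w j) = real N * (\<Sum>j\<in>UNIV. (e$None$j)^2)
        - sqrt (real N) * (\<Sum>k\<in>UNIV. b$k * (\<Sum>j\<in>UNIV. e$None$j * e$Some k$j))"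
    proof -
      have "(\<Sum>j\<in>UNIV. w j) = real N * (\<Sum>j\<in>UNIV. (e$None$j)^2)
          - (\<Sum>j\<in>UNIV. \<Sum>k\<in>UNIV. sqrt (real N) * (b$k * (e$None$j * e$Some k$j)))"
        by (simp add: w_def sum_subtractf sum_distrib_left mult_ac)
      also have "(\<Sum>j\<in>UNIV. \<Sum>k\<in>UNIV. sqrt (real N) * (b$k * (e$None$j * e$Some k$j)))
          = (\<Sum>k\<in>UNIV. \<Sum>j\<in>UNIV. sqrt (real N) * (b$k * (e$None$j * e$Some k$j)))"
        by (rule sum.swap)
      also have "\<dots> = sqrt (real N) * (\<Sum>k\<in>UNIV. b$k * (\<Sum>j\<in>UNIV. e$None$j * e$Some k$j))"
        by (simp add: sum_distrib_left)
      finally show ?thesis .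
    qed
    also have "\<dots> = real N" by (simp add: O1 O2)
    finally show ?thesis .
  qed
  have NA: "real N = (real N + c) * A"
    using wsum wq by (simp add: A_def sum_distrib_left)
  have Nc: "real N + c = real N / A" using NA Apos by (simp add: field_simps)
  have Nc0: "real N + c > 0" using Nc Apos Npos by simp
  have ueq: "gv = (\<Sum>j\<in>UNIV. w j * u t (shift e N x j)) - (real N + c) * u (t - 1/real N) x"
    using eq generic[OF O1, of N u t x b c] unfolding w_def b_def c_def by simp
  also have "\<dots> = (real N + c) * ((\<Sum>j\<in>UNIV. q$j * u t (shift e N x j)) - u (t - 1/real N) x)"
    by (simp add: wq sum_distrib_left right_diff_distrib mult_ac)
  finally have "u (t - 1/real N) x = (\<Sum>j\<in>UNIV. q$j * u t (shift e N x j)) - gv / (real N + c)"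
    using Nc0 by (simp add: field_simps)
  then show ?thesis using Nc Apos Npos
    unfolding q_def p_def H_def A_def by (simp add: field_simps)
qed

theorem mainTheorem8:
  fixes e :: "real^('n::finite option)^('n option)" and N :: nat and T :: real
    and h :: "real \<Rightarrow> real^'n \<Rightarrow> real^('n option)"
    and \<Psi> :: "real^'n \<Rightarrow> real" and g u :: "real \<Rightarrow> real^'n \<Rightarrow> real"
  assumes "orthogonal_matrix e" and "\<forall>j. 0 < e $ None $ j" and "0 < N"
    and "\<forall>t\<in>grid N \<inter> {0..<TN N T}. \<forall>x.
           invertible (Hmat e N h (t + 1 / real N) x) \<and>
           (\<forall>i. 0 < (h t x v* matrix_inv (Hmat e N h (t + 1 / real N) x)) $ i) \<and>
           (\<Sum>i\<in>UNIV. (h t x v* matrix_inv (Hmat e N h (t + 1 / real N) x)) $ i) < 1"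
    and "bounded (range \<Psi>)"
    and "bounded ((\<lambda>(s, y). g s y) ` ((grid N \<inter> {0<..TN N T}) \<times> UNIV))"
    and "\<forall>x. u (TN N T) x = \<Psi> x"
    and "\<forall>t\<in>grid N \<inter> {0<..TN N T}. \<forall>x.
           dt N u t x + (1/2) * lap e N u t x - bN e N h t x \<bullet> grad e N u t x
           - cN e N h t x * u (t - 1 / real N) x = g t x"
  shows "\<forall>t\<in>grid N \<inter> {0..TN N T}. \<forall>x.
           \<bar>u t x\<bar> \<le> (SUP y. \<bar>\<Psi> y\<bar>)
             + (TN N T - t) * (SUP p\<in>(grid N \<inter> {t<..TN N T}) \<times> UNIV. \<bar>g (fst p) (snd p)\<bar>)"
proof -
  define TT where "TT = TN N T"
  define SP where "SP = (SUP y. \<bar>\<Psi> y\<bar>)"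
  define G where "G t = (SUP p\<in>(grid N \<inter> {t<..TT}) \<times> UNIV. \<bar>g (fst p) (snd p)\<bar>)" for t
  have Np: "real N > 0" using assms(3) by simp
  obtain K where K: "\<forall>z\<in>(\<lambda>(s, y). g s y) ` ((grid N \<inter> {0<..TT}) \<times> UNIV). norm z \<le> K"
    using assms(6) unfolding bounded_iff TT_def by blast
  have Kg: "\<bar>g s y\<bar> \<le> K" if "s \<in> grid N" "0 < s" "s \<le> TT" for s y
    using K that by force
  have bddG: "bdd_above ((\<lambda>p. \<bar>g (fst p) (snd p)\<bar>) ` ((grid N \<inter> {t<..TT}) \<times> UNIV))"
    if "t \<ge> 0" for t
    unfolding bdd_above_def using Kg that by force
  obtain KP where KP: "\<forall>z\<in>range \<Psi>. norm z \<le> KP"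
    using assms(5) unfolding bounded_iff by blast
  have SPb: "\<bar>\<Psi> y\<bar> \<le> SP" for y
    unfolding SP_def by (rule cSUP_upper) (use KP in \<open>auto simp: bdd_above_def\<close>)
  show ?thesis
    unfolding TT_def[symmetric] SP_def[symmetric] G_def[symmetric]
  proof (intro ballI allI)
    fix t x assume t: "t \<in> grid N \<inter> {0..TT}"
    obtain k :: nat where tk: "t = real k / real N" using t unfolding grid_def by blast
    have fl: "0 \<le> \<lfloor>T * real N\<rfloor>"
    proof -
      have "0 \<le> TT" using t by simp
      then show ?thesis unfolding TT_def TN_def using Np by (simp add: divide_nonneg_pos zero_le_divide_iff)
    qed
    define M where "M = nat \<lfloor>T * real N\<rfloor>"
    have TTM: "TT = real M / real N" unfolding TT_def TN_def M_def using fl by simp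
    have kM: "k \<le> M"
    proof -
      have "real k / real N \<le> real M / real N" using t tk TTM by simp
      then have "real k \<le> real M" using Np by (simp add: divide_le_cancel)
      then show ?thesis by simp
    qed
    have TTg: "TT \<in> grid N" unfolding TTM grid_def by blast
    have claim: "d \<le> M \<longrightarrow> (\<forall>x. \<bar>u (real (M - d) / real N) x\<bar> \<le> SP + (real d / real N) * G (real (M - d) / real N))" for d
    proof (induction d)
      case 0
      show ?case
      proof (intro impI allI)
        fix x
        have "u (real (M - 0) / real N) x = \<Psi> x" using assms(7) TTM unfolding TT_def by simp
        then show "\<bar>u (real (M - 0) / real N) x\<bar> \<le> SP + (real 0 / real N) * G (real (M - 0) / real N)"
          using SPb by simp
      qed
    next
      case (Suc d)
      show ?case
      proof (intro impI allI)
        fix x assume dM: "Suc d \<le> M"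
        define t1 where "t1 = real (M - d) / real N"
        define t0 where "t0 = real (M - Suc d) / real N"
        define B where "B = SP + (real d / real N) * G t1"
        have IH: "\<forall>y. \<bar>u t1 y\<bar> \<le> B" using Suc.IH dM unfolding t1_def B_def by simp
        have t01: "t0 + 1 / real N = t1"
          unfolding t0_def t1_def using dM Np by (simp add: of_nat_diff field_simps)
        have t10: "t1 - 1 / real N = t0" using t01 by simp
        have t0g: "t0 \<in> grid N \<inter> {0..<TT}"
        proof -
          have "t0 < TT" unfolding t0_def TTM using Np dM by (simp add: divide_strict_right_mono)
          moreover have "0 \<le> t0" unfolding t0_def by simp
          moreover have "t0 \<in> grid N" unfolding t0_def grid_def by blast
          ultimately show ?thesis by simp
        qed
        have t1g: "t1 \<in> grid N \<inter> {0<..TT}"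
        proof -
          have "t1 \<le> TT" unfolding t1_def TTM using Np dM by (simp add: divide_right_mono)
          moreover have "0 < t1" unfolding t1_def using dM Np by simp
          moreover have "t1 \<in> grid N" unfolding t1_def grid_def by blast
          ultimately show ?thesis by simp
        qed
        have t01lt: "t0 < t1"
        proof -
          have "1 / real N > 0" using Np by simp
          then show ?thesis using t01 by linarith
        qed
        have Hx: "invertible (Hmat e N h t1 x) \<and>
           (\<forall>i. 0 < (h (t1 - 1 / real N) x v* matrix_inv (Hmat e N h t1 x)) $ i) \<and>
           (\<Sum>i\<in>UNIV. (h (t1 - 1 / real N) x v* matrix_inv (Hmat e N h t1 x)) $ i) < 1"
          using assms(4) t0g unfolding TT_def t10 t01[symmetric] by auto
        have Ex: "dt N u t1 x + (1/2) * lap e N u t1 x - bN e N h t1 x \<bullet> grad e N u t1 x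
           - cN e N h t1 x * u (t1 - 1 / real N) x = g t1 x"
          using assms(8) t1g unfolding TT_def by auto
        define q where "q = h (t1 - 1 / real N) x v* matrix_inv (Hmat e N h t1 x)"
        define A where "A = (\<Sum>i\<in>UNIV. q $ i)"
        have qp: "\<forall>i. 0 < q$i" using Hx unfolding q_def by blast
        have A1: "A < 1" using Hx unfolding A_def q_def by blast
        have A0: "0 \<le> A" unfolding A_def using qp by (simp add: less_imp_le sum_nonneg)
        have ux: "u t0 x = (\<Sum>j\<in>UNIV. q$j * u t1 (shift e N x j)) - (A / real N) * g t1 x"
          using step[OF assms(1) assms(2) assms(3) conjunct1[OF Hx] conjunct1[OF conjunct2[OF Hx]]
              conjunct2[OF conjunct2[OF Hx]] Ex]
          unfolding q_def A_def t10 by simp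
        have Bnn: "0 \<le> B" using IH[rule_format, of x] by linarith
        have s1: "\<bar>\<Sum>j\<in>UNIV. q$j * u t1 (shift e N x j)\<bar> \<le> A * B"
        proof -
          have "\<bar>\<Sum>j\<in>UNIV. q$j * u t1 (shift e N x j)\<bar> \<le> (\<Sum>j\<in>UNIV. \<bar>q$j * u t1 (shift e N x j)\<bar>)"
            by (rule sum_abs)
          also have "\<dots> \<le> (\<Sum>j\<in>UNIV. q$j * B)"
          proof (rule sum_mono)
            fix j :: "'n option"
            have "\<bar>q$j * u t1 (shift e N x j)\<bar> = q$j * \<bar>u t1 (shift e N x j)\<bar>"
              using qp by (simp add: abs_mult less_imp_le)
            also have "\<dots> \<le> q$j * B" using qp IH by (simp add: mult_left_mono less_imp_le)
            finally show "\<bar>q$j * u t1 (shift e N x j)\<bar> \<le> q$j * B" .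
          qed
          also have "\<dots> = A * B" unfolding A_def by (simp add: sum_distrib_right)
          finally show ?thesis .
        qed
        have s2: "\<bar>(A / real N) * g t1 x\<bar> = A * (\<bar>g t1 x\<bar> / real N)"
          using A0 Np by (simp add: abs_mult)
        have s3: "\<bar>u t0 x\<bar> \<le> A * (B + \<bar>g t1 x\<bar> / real N)"
        proof -
          have "\<bar>u t0 x\<bar> \<le> \<bar>\<Sum>j\<in>UNIV. q$j * u t1 (shift e N x j)\<bar> + \<bar>(A / real N) * g t1 x\<bar>"
            unfolding ux by (rule abs_triangle_ineq4)
          then have "\<bar>u t0 x\<bar> \<le> A * B + A * (\<bar>g t1 x\<bar> / real N)" using s1 s2 by linarith
          then show ?thesis by (simp add: distrib_left)
        qed
        have s4: "A * (B + \<bar>g t1 x\<bar> / real N) \<le> B + \<bar>g t1 x\<bar> / real N"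
          by (rule mult_left_le_one_le) (use Bnn A0 A1 Np in auto)
        have t0nn: "0 \<le> t0" using t0g by simp
        have gG: "\<bar>g t1 x\<bar> \<le> G t0"
          unfolding G_def
          by (rule cSUP_upper2[OF bddG[OF t0nn], of "(t1, x)"]) (use t1g t01lt in auto)
        have GG: "(real d / real N) * G t1 \<le> (real d / real N) * G t0"
        proof (cases "d = 0")
          case True then show ?thesis by simp
        next
          case False
          have "real (M - d) < real M" using False dM by simp
          then have t1lt: "t1 < TT" unfolding t1_def TTM using Np by (rule divide_strict_right_mono)
          have ne: "(grid N \<inter> {t1<..TT}) \<times> (UNIV::(real^'n) set) \<noteq> {}"
          proof -
            have "(TT, x) \<in> (grid N \<inter> {t1<..TT}) \<times> (UNIV::(real^'n) set)" using TTg t1lt by simp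
            then show ?thesis by blast
          qed
          have sub: "(grid N \<inter> {t1<..TT}) \<times> (UNIV::(real^'n) set) \<subseteq> (grid N \<inter> {t0<..TT}) \<times> UNIV"
            using t01lt by auto
          have "G t1 \<le> G t0" unfolding G_def
            by (rule cSUP_subset_mono[where f="\<lambda>p. \<bar>g (fst p) (snd p)\<bar>" and g="\<lambda>p. \<bar>g (fst p) (snd p)\<bar>",
                  OF ne bddG[OF t0nn] sub order_refl])
          then show ?thesis using Np by (intro mult_left_mono) auto
        qed
        have "\<bar>u t0 x\<bar> \<le> SP + (real d / real N) * G t0 + G t0 / real N"
        proof -
          have "\<bar>g t1 x\<bar> / real N \<le> G t0 / real N" using gG Np by (simp add: divide_right_mono)
          then show ?thesis using s3 s4 GG unfolding B_def by linarith
        qed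
        also have "\<dots> = SP + (real (Suc d) / real N) * G t0"
          using Np by (simp add: field_simps)
        finally show "\<bar>u (real (M - Suc d) / real N) x\<bar> \<le> SP + (real (Suc d) / real N) * G (real (M - Suc d) / real N)"
          unfolding t0_def .
      qed
    qed
    have "\<bar>u (real (M - (M - k)) / real N) x\<bar> \<le> SP + (real (M - k) / real N) * G (real (M - (M - k)) / real N)"
      using claim[of "M - k"] by simp
    moreover have "real (M - (M - k)) / real N = t" using kM tk by simp
    moreover have "real (M - k) / real N = TT - t" using kM tk TTM by (simp add: of_nat_diff diff_divide_distrib)
    ultimately show "\<bar>u t x\<bar> \<le> SP + (TT - t) * G t" by simp
  qed
qed

end
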